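(* Let $\{S_1,\dots,S_N\}$ be an IFS of contracting similitudes of $\mathbb R^d$, ordered by $1\prec2\prec\cdots\prec N$. Then it is a linear IFS if and only if $S_{i+1}(\mathrm{Fix}(S_1))=S_i(\mathrm{Fix}(S_N))$ for all $i=1,\dots,N-1$, where $\mathrm{Fix}(S)$ denotes the unique fixed point of $S$.
   Context: Let $K$ be the invariant set of the IFS, i.e. the unique nonempty compact set with $K=\bigcup_{j=1}^N S_j(K)$. For a word $i_1\dots i_m\in\{1,\dots,N\}^m$ write $S_{i_1\dots i_m}=S_{i_1}\circ\cdots\circ S_{i_m}$. Order the words of length $m$ lexicographically (with $1\prec\cdots\prec N$); two words of length $m$ are adjacent if they are consecutive in this order. The ordered IFS is a linear IFS if $S_\omega(K)\cap S_\gamma(K)\neq\emptyset$ for every $m\ge1$ and every pair of adjacent words $\omega,\gamma$ of length $m$. *)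

theory Defs
  imports "HOL-Analysis.Analysis"
begin

definition contracting_similitude :: "('a::metric_space \<Rightarrow> 'a) \<Rightarrow> bool" where
  "contracting_similitude f \<longleftrightarrow>
     (\<exists>r. 0 < r \<and> r < 1 \<and> (\<forall>x y. dist (f x) (f y) = r * dist x y))"

definition fixpt :: "('a \<Rightarrow> 'a) \<Rightarrow> 'a" where
  "fixpt f = (THE x. f x = x)"

definition words :: "nat \<Rightarrow> nat \<Rightarrow> nat list set" where
  "words N m = {w. length w = m \<and> set w \<subseteq> {1..N}}"

definition word_map :: "(nat \<Rightarrow> 'a \<Rightarrow> 'a) \<Rightarrow> nat list \<Rightarrow> 'a \<Rightarrow> 'a" where
  "word_map S w = foldr (\<lambda>i f. S i \<circ> f) w id"

definition adjacent_words :: "nat \<Rightarrow> nat \<Rightarrow> nat list \<Rightarrow> nat list \<Rightarrow> bool" where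
  "adjacent_words N m \<omega> \<gamma> \<longleftrightarrow>
     \<omega> \<in> words N m \<and> \<gamma> \<in> words N m \<and> (\<omega>, \<gamma>) \<in> lex less_than \<and>
     \<not> (\<exists>\<delta>\<in>words N m. (\<omega>, \<delta>) \<in> lex less_than \<and> (\<delta>, \<gamma>) \<in> lex less_than)"

text \<open>Linear IFS, relative to its invariant set K.\<close>
definition linear_ifs :: "(nat \<Rightarrow> 'a \<Rightarrow> 'a) \<Rightarrow> nat \<Rightarrow> 'a set \<Rightarrow> bool" where
  "linear_ifs S N K \<longleftrightarrow>
     (\<forall>m\<ge>1. \<forall>\<omega> \<gamma>. adjacent_words N m \<omega> \<gamma> \<longrightarrow>
        word_map S \<omega> ` K \<inter> word_map S \<gamma> ` K \<noteq> {})"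

end

theory Submission
  imports Defs
begin

lemma wm_Cons [simp]: "word_map S (a # w) = S a \<circ> word_map S w"
  by (simp add: word_map_def)

lemma wm_Nil [simp]: "word_map S [] = id"
  by (simp add: word_map_def)

lemma wm_append: "word_map S (u @ v) = word_map S u \<circ> word_map S v"
  by (induct u) auto

lemma fix_in:
  fixes f :: "'a::euclidean_space \<Rightarrow> 'a"
  assumes "contracting_similitude f" "compact K" "K \<noteq> {}" "f ` K \<subseteq> K"
  shows "f (fixpt f) = fixpt f \<and> fixpt f \<in> K"
proof -
  obtain r where r: "0 < r" "r < 1" "\<forall>x y. dist (f x) (f y) = r * dist x y"
    using assms(1) unfolding contracting_similitude_def by blast
  have "\<exists>!x\<in>K. f x = x"
    using Banach_fix[OF compact_imp_complete[OF assms(2)] assms(3) _ r(2) assms(4)] r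
    by auto
  then obtain x where x: "x \<in> K" "f x = x" by blast
  have u: "y = x" if "f y = y" for y
  proof -
    have "dist (f y) (f x) = r * dist y x" using r(3) by blast
    then have "dist y x = r * dist y x" using that x(2) by simp
    then have "(1 - r) * dist y x = 0" by (simp add: algebra_simps)
    then have "dist y x = 0" using r(2) by simp
    then show ?thesis by simp
  qed
  have "fixpt f = x" unfolding fixpt_def
    by (rule the_equality[where P="\<lambda>y. f y = y"]) (use x u in blast)+
  then show ?thesis using x by simp
qed

lemma rep_max: "set v \<subseteq> {1..N} \<Longrightarrow> length v = k \<Longrightarrow> (replicate k N, v) \<notin> lex less_than"
  by (induct v arbitrary: k) auto

lemma rep_min: "set v \<subseteq> {1..N} \<Longrightarrow> length v = k \<Longrightarrow> (v, replicate k 1) \<notin> lex less_than"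
  by (induct v arbitrary: k) auto

lemma rep_max': "set v \<subseteq> {1..N} \<Longrightarrow> length v = k \<Longrightarrow> v \<noteq> replicate k N
   \<Longrightarrow> (v, replicate k N) \<in> lex less_than"
  by (induct v arbitrary: k) (auto simp: Suc_le_eq)

lemma rep_min': "set v \<subseteq> {1..N} \<Longrightarrow> length v = k \<Longrightarrow> v \<noteq> replicate k 1
   \<Longrightarrow> (replicate k 1, v) \<in> lex less_than"
  by (induct v arbitrary: k) (auto simp: Suc_le_eq)

lemma wm_rep_fix: "f p = p \<Longrightarrow> word_map S (replicate k j) p = p" if "S j = f" for f
  using that by (induct k) auto

lemma wm_rep_dist:
  assumes "\<forall>x y. dist (S j x) (S j y) = r * dist x y"
  shows "dist (word_map S (replicate k j) x) (word_map S (replicate k j) y) = r ^ k * dist x y"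
  using assms by (induct k) auto

theorem corollary4p2:
  fixes S :: "nat \<Rightarrow> 'a::euclidean_space \<Rightarrow> 'a" and N :: nat and K :: "'a set"
  assumes "N \<ge> 1"
    and "\<forall>j\<in>{1..N}. contracting_similitude (S j)"
    and "compact K" and "K \<noteq> {}" and "K = (\<Union>j\<in>{1..N}. S j ` K)"
  shows "linear_ifs S N K \<longleftrightarrow>
         (\<forall>i\<in>{1..N-1}. S (i+1) (fixpt (S 1)) = S i (fixpt (S N)))"
proof -
  have sub: "\<forall>j\<in>{1..N}. S j ` K \<subseteq> K" using assms(5) by blast
  have F1: "S 1 (fixpt (S 1)) = fixpt (S 1) \<and> fixpt (S 1) \<in> K"
    using fix_in[of "S 1" K] assms(1-4) sub by auto
  have FN: "S N (fixpt (S N)) = fixpt (S N) \<and> fixpt (S N) \<in> K"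
    using fix_in[of "S N" K] assms(1-4) sub by auto
  define F1 where "F1 = fixpt (S 1)"
  define FN where "FN = fixpt (S N)"
  note F1 = F1[folded F1_def] and FN = FN[folded FN_def]
  show ?thesis unfolding F1_def[symmetric] FN_def[symmetric]
  proof
    assume lin: "linear_ifs S N K"
    show "\<forall>i\<in>{1..N-1}. S (i+1) F1 = S i FN"
    proof (intro ballI, rule ccontr)
      fix i assume i: "i \<in> {1..N-1}" and ne: "S (i+1) F1 \<noteq> S i FN"
      define e where "e = dist (S (i+1) F1) (S i FN)"
      have e: "e > 0" using ne e_def by simp
      have "contracting_similitude (S 1)" using assms(1,2) by auto
      then obtain r1 where r1: "0 < r1" "r1 < 1" "\<forall>x y. dist (S 1 x) (S 1 y) = r1 * dist x y"
        unfolding contracting_similitude_def by blast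
      have "contracting_similitude (S N)" using assms(1,2) by auto
      then obtain rN where rN: "0 < rN" "rN < 1" "\<forall>x y. dist (S N x) (S N y) = rN * dist x y"
        unfolding contracting_similitude_def by blast
      have "contracting_similitude (S i)" using assms(2) i by auto
      then obtain ri where ri: "0 < ri" "ri < 1" "\<forall>x y. dist (S i x) (S i y) = ri * dist x y"
        unfolding contracting_similitude_def by blast
      have "contracting_similitude (S (i+1))" using assms(2) i by auto
      then obtain ri1 where ri1: "0 < ri1" "ri1 < 1" "\<forall>x y. dist (S (i+1) x) (S (i+1) y) = ri1 * dist x y"
        unfolding contracting_similitude_def by blast
      obtain D1 where D1: "\<forall>x\<in>K. dist F1 x \<le> D1"
        using compact_imp_bounded[OF assms(3)] bounded_any_center by blast
      obtain D2 where D2: "\<forall>x\<in>K. dist FN x \<le> D2"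
        using compact_imp_bounded[OF assms(3)] bounded_any_center by blast
      define D where "D = max D1 D2 + 1"
      have "dist F1 F1 \<le> D1" using D1 F1 by blast
      then have "0 \<le> D1" by simp
      then have Dp: "D > 0" unfolding D_def by simp
      define c where "c = max r1 rN"
      have c: "0 < c" "c < 1" using r1 rN unfolding c_def by auto
      have "e / (2 * D) > 0" using e Dp by simp
      then obtain k where k: "c ^ k < e / (2 * D)"
        using real_arch_pow_inv[OF _ c(2)] by blast
      have adj: "adjacent_words N (Suc k) (i # replicate k N) ((i+1) # replicate k 1)"
        unfolding adjacent_words_def words_def
      proof (intro conjI)
        show "\<not> (\<exists>\<delta>\<in>{w. length w = Suc k \<and> set w \<subseteq> {1..N}}.
           (i # replicate k N, \<delta>) \<in> lex less_than \<and> (\<delta>, (i + 1) # replicate k 1) \<in> lex less_than)"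
        proof
          assume "\<exists>\<delta>\<in>{w. length w = Suc k \<and> set w \<subseteq> {1..N}}.
           (i # replicate k N, \<delta>) \<in> lex less_than \<and> (\<delta>, (i + 1) # replicate k 1) \<in> lex less_than"
          then obtain \<delta> where d: "length \<delta> = Suc k" "set \<delta> \<subseteq> {1..N}"
            "(i # replicate k N, \<delta>) \<in> lex less_than" "(\<delta>, (i + 1) # replicate k 1) \<in> lex less_than"
            by blast
          then obtain d t where dt: "length t = k" "set (d # t) \<subseteq> {1..N}"
            "(i # replicate k N, d # t) \<in> lex less_than" "(d # t, (i + 1) # replicate k 1) \<in> lex less_than"
            by (cases \<delta>) auto
          have "(replicate k N, t) \<notin> lex less_than" "(t, replicate k 1) \<notin> lex less_than"
            using rep_max[of t N k] rep_min[of t N k] dt by auto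
          then show False using dt(3,4) by auto
        qed
      qed (use i in auto)
      have "\<forall>\<omega> \<gamma>. adjacent_words N (Suc k) \<omega> \<gamma> \<longrightarrow>
        word_map S \<omega> ` K \<inter> word_map S \<gamma> ` K \<noteq> {}"
        using lin unfolding linear_ifs_def by (drule_tac x="Suc k" in spec) simp
      then have "word_map S (i # replicate k N) ` K \<inter> word_map S ((i+1) # replicate k 1) ` K \<noteq> {}"
        using adj by blast
      then obtain x y where xy: "x \<in> K" "y \<in> K"
        "S i (word_map S (replicate k N) x) = S (i+1) (word_map S (replicate k 1) y)"
        by auto
      define z where "z = S i (word_map S (replicate k N) x)"
      have wN: "word_map S (replicate k N) FN = FN" using wm_rep_fix[of S N "S N" FN k] FN by simp
      have w1: "word_map S (replicate k 1) F1 = F1" using wm_rep_fix[of S 1 "S 1" F1 k] F1 by simp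
      have "dist z (S i FN) = dist (S i (word_map S (replicate k N) x)) (S i (word_map S (replicate k N) FN))"
        by (simp add: z_def wN)
      also have "\<dots> = ri * (rN ^ k * dist x FN)"
        using ri(3) wm_rep_dist[of S N rN k x FN] rN(3) by simp
      also have "\<dots> \<le> c ^ k * D"
      proof -
        have "rN ^ k \<le> c ^ k" using rN by (intro power_mono) (auto simp: c_def)
        moreover have "dist x FN \<le> D"
        proof -
          have "dist FN x \<le> D2" using D2 xy(1) by blast
          then show ?thesis unfolding D_def by (simp add: dist_commute)
        qed
        ultimately have "rN ^ k * dist x FN \<le> c ^ k * D"
          by (intro mult_mono) (use c in auto)
        moreover have "0 \<le> rN ^ k * dist x FN" using rN by simp
        ultimately show ?thesis using ri mult_left_le_one_le[of "rN ^ k * dist x FN" ri] by linarith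
      qed
      finally have d1: "dist z (S i FN) \<le> c ^ k * D" .
      have "dist z (S (i+1) F1) = dist (S (i+1) (word_map S (replicate k 1) y)) (S (i+1) (word_map S (replicate k 1) F1))"
        by (simp only: z_def xy(3) w1)
      also have "\<dots> = ri1 * (r1 ^ k * dist y F1)"
        using ri1(3) wm_rep_dist[of S 1 r1 k y F1] r1(3) by simp
      also have "\<dots> \<le> c ^ k * D"
      proof -
        have "r1 ^ k \<le> c ^ k" using r1 by (intro power_mono) (auto simp: c_def)
        moreover have "dist y F1 \<le> D"
        proof -
          have "dist F1 y \<le> D1" using D1 xy(2) by blast
          then show ?thesis unfolding D_def by (simp add: dist_commute)
        qed
        ultimately have "r1 ^ k * dist y F1 \<le> c ^ k * D"
          by (intro mult_mono) (use c in auto)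
        moreover have "0 \<le> r1 ^ k * dist y F1" using r1 by simp
        ultimately show ?thesis using ri1 mult_left_le_one_le[of "r1 ^ k * dist y F1" ri1] by linarith
      qed
      finally have d2: "dist z (S (i+1) F1) \<le> c ^ k * D" .
      have "e \<le> dist z (S (i+1) F1) + dist z (S i FN)"
        unfolding e_def by (rule dist_triangle3)
      also have "\<dots> \<le> 2 * (c ^ k * D)" using d1 d2 by simp
      also have "\<dots> < e" using k Dp by (simp add: field_simps)
      finally show False by simp
    qed
  next
    assume H: "\<forall>i\<in>{1..N-1}. S (i+1) F1 = S i FN"
    show "linear_ifs S N K"
      unfolding linear_ifs_def
    proof (intro allI impI)
      fix m \<omega> \<gamma> assume adj: "adjacent_words N m \<omega> \<gamma>"
      then have wo: "\<omega> \<in> words N m" and wg: "\<gamma> \<in> words N m" and lx: "(\<omega>, \<gamma>) \<in> lex less_than"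
        and nb: "\<And>\<delta>. \<delta> \<in> words N m \<Longrightarrow> (\<omega>, \<delta>) \<in> lex less_than \<Longrightarrow> (\<delta>, \<gamma>) \<notin> lex less_than"
        unfolding adjacent_words_def by blast+
      obtain u a b v w where dec: "\<omega> = u @ a # v" "\<gamma> = u @ b # w" "a < b"
        using lx unfolding lex_conv by auto
      have lvw: "length v = length w" using wo wg dec unfolding words_def by simp
      define k where "k = length v"
      have setw: "set u \<subseteq> {1..N}" "a \<in> {1..N}" "b \<in> {1..N}" "set v \<subseteq> {1..N}" "set w \<subseteq> {1..N}"
        using wo wg dec unfolding words_def by auto
      have v: "v = replicate k N"
      proof (rule ccontr)
        assume ne: "v \<noteq> replicate k N"
        define \<delta> where "\<delta> = u @ a # replicate k N"
        have "\<delta> \<in> words N m" using wo setw assms(1) unfolding words_def \<delta>_def dec k_def by auto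
        moreover have "(\<omega>, \<delta>) \<in> lex less_than" unfolding dec \<delta>_def
          by (intro lex_append_leftI) (use rep_max'[of v N k] ne setw k_def in auto)
        moreover have "(\<delta>, \<gamma>) \<in> lex less_than" unfolding dec \<delta>_def
          by (intro lex_append_leftI) (use dec lvw k_def in auto)
        ultimately show False using nb by blast
      qed
      have w: "w = replicate k 1"
      proof (rule ccontr)
        assume ne: "w \<noteq> replicate k 1"
        define \<delta> where "\<delta> = u @ b # replicate k 1"
        have "\<delta> \<in> words N m" using wg setw assms(1) lvw unfolding words_def \<delta>_def dec k_def by auto
        moreover have "(\<omega>, \<delta>) \<in> lex less_than" unfolding dec \<delta>_def
          by (intro lex_append_leftI) (use dec lvw k_def in auto)
        moreover have "(\<delta>, \<gamma>) \<in> lex less_than" unfolding dec \<delta>_def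
          by (intro lex_append_leftI) (use rep_min'[of w N k] ne setw lvw k_def in auto)
        ultimately show False using nb by blast
      qed
      have b: "b = a + 1"
      proof (rule ccontr)
        assume ne: "b \<noteq> a + 1"
        define \<delta> where "\<delta> = u @ (a+1) # v"
        have "\<delta> \<in> words N m" using wo setw dec ne unfolding words_def \<delta>_def by auto
        moreover have "(\<omega>, \<delta>) \<in> lex less_than" unfolding dec \<delta>_def
          by (intro lex_append_leftI) auto
        moreover have "(\<delta>, \<gamma>) \<in> lex less_than" unfolding dec \<delta>_def
          by (intro lex_append_leftI) (use dec lvw ne in auto)
        ultimately show False using nb by blast
      qed
      have ai: "a \<in> {1..N-1}" using setw b by auto
      have wN: "word_map S (replicate k N) FN = FN" using wm_rep_fix[of S N "S N" FN k] FN by simp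
      have w1: "word_map S (replicate k 1) F1 = F1" using wm_rep_fix[of S 1 "S 1" F1 k] F1 by simp
      have "word_map S \<omega> FN = word_map S \<gamma> F1"
        unfolding dec v w b using wN w1 H ai by (simp add: wm_append)
      then show "word_map S \<omega> ` K \<inter> word_map S \<gamma> ` K \<noteq> {}"
        using F1 FN by blast
    qed
  qed
qed

end
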